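(* Suppose $w$ satisfies (A1). Let $f\in C^2([0,1])$ and let $u\in C^4([0,1])$ be the classical solution of $-u''=f$ in $\Omega$, $u(0)=u(1)=0$. For $\delta\in(0,1/2)$ let $u_\delta\in L^2(\Omega)$ be the solution of the constant-extension nonlocal problem $\mathcal L_\delta u_\delta(x)=\int_{x-\delta}^{x+\delta}(u_\delta(x)-u_\delta(y))w_\delta(x,y)\,dy=f(x)$ for $x\in\Omega$, with $u_\delta(y)=0$ for $y\in(-\delta,0]\cup[1,1+\delta)$. Then there exist $\delta_0>0$ and $C>0$ such that $\|u_\delta-u\|_{L^\infty(\Omega)}\le C\delta$ for all $\delta\in(0,\delta_0)$.
   Context: $\Omega=(0,1)$. A function $w:[0,\infty)\to[0,\infty)$ satisfies (A1) if $w$ is continuous and nonincreasing on $[0,1)$, positive on $(0,1)$, $w(r)=0$ for $r\ge 1$, and $\int_{\mathbb R} w(|z|)|z|^2\,dz=2$. Set $w_\delta(x,y)=\delta^{-3}w(|x-y|/\delta)$. *)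

theory Defs
  imports "HOL-Analysis.Analysis"
begin

definition A1 :: "(real \<Rightarrow> real) \<Rightarrow> bool" where
  "A1 w \<longleftrightarrow>
     (\<forall>r\<ge>0. w r \<ge> 0) \<and>
     continuous_on {0..<1} w \<and>
     (\<forall>r s. 0 \<le> r \<and> r \<le> s \<and> s < 1 \<longrightarrow> w s \<le> w r) \<and>
     (\<forall>r\<in>{0<..<1}. w r > 0) \<and>
     (\<forall>r\<ge>1. w r = 0) \<and>
     ((\<lambda>z. w \<bar>z\<bar> * \<bar>z\<bar>\<^sup>2) has_integral 2) UNIV"

definition wdelta :: "(real \<Rightarrow> real) \<Rightarrow> real \<Rightarrow> real \<Rightarrow> real \<Rightarrow> real" where
  "wdelta w \<delta> x y = w (\<bar>x - y\<bar> / \<delta>) / \<delta> ^ 3"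

definition Ck_on :: "nat \<Rightarrow> real set \<Rightarrow> (real \<Rightarrow> real) \<Rightarrow> bool" where
  "Ck_on k S g \<longleftrightarrow> (\<exists>D. D 0 = g \<and>
     (\<forall>i<k. \<forall>x\<in>S. (D i has_real_derivative D (Suc i) x) (at x within S)) \<and>
     (\<forall>i\<le>k. continuous_on S (D i)))"

end

theory Submission
  imports Defs
begin


lemma A1_facts:
  assumes "A1 w"
  shows "\<And>r. r \<ge> 0 \<Longrightarrow> w r \<ge> 0"
    and "\<And>r s. 0 \<le> r \<Longrightarrow> r \<le> s \<Longrightarrow> w s \<le> w r"
    and "\<And>r. r \<ge> 1 \<Longrightarrow> w r = 0"
    and "w (1/2) > 0"
    and "((\<lambda>z. w \<bar>z\<bar> * \<bar>z\<bar>\<^sup>2) has_integral 2) UNIV"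
proof -
  note a = assms[unfolded A1_def]
  show "\<And>r. r \<ge> 0 \<Longrightarrow> w r \<ge> 0" using a by auto
  show "\<And>r. r \<ge> 1 \<Longrightarrow> w r = 0" using a by auto
  show "w (1/2) > 0" using a by auto
  show "((\<lambda>z. w \<bar>z\<bar> * \<bar>z\<bar>\<^sup>2) has_integral 2) UNIV" using a by auto
  fix r s :: real assume "0 \<le> r" "r \<le> s"
  then show "w s \<le> w r"
  proof (cases "s < 1")
    case True then show ?thesis using a \<open>0 \<le> r\<close> \<open>r \<le> s\<close> by blast
  next
    case False then have "w s = 0" using a by auto
    then show ?thesis using a \<open>0 \<le> r\<close> by auto
  qed
qed

lemma w_meas:
  assumes "A1 w" "d > 0"
  shows "(\<lambda>y. w (\<bar>x - y\<bar> / d)) \<in> borel_measurable borel"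
proof -
  define g where "g r = - w (max 0 r)" for r
  have "mono g"
    unfolding mono_def g_def using A1_facts(2)[OF assms(1)] by (auto simp: max_def)
  then have gm: "g \<in> borel_measurable borel" by (rule borel_measurable_mono)
  have "(\<lambda>y. - g (\<bar>x - y\<bar> / d)) \<in> borel_measurable borel"
    using gm by measurable
  moreover have "(\<lambda>y. - g (\<bar>x - y\<bar> / d)) = (\<lambda>y. w (\<bar>x - y\<bar> / d))"
    using assms(2) by (auto simp: g_def max_def fun_eq_iff)
  ultimately show ?thesis by simp
qed

lemma omega_int:
  assumes "A1 w"
  shows "integrable lborel (\<lambda>z. w \<bar>z\<bar> * \<bar>z\<bar>\<^sup>2)" "(\<integral>z. w \<bar>z\<bar> * \<bar>z\<bar>\<^sup>2 \<partial>lborel) = 2"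
proof -
  have hi: "((\<lambda>z. w \<bar>z\<bar> * \<bar>z\<bar>\<^sup>2) has_integral 2) UNIV" using A1_facts(5)[OF assms] .
  have nn: "\<And>z. 0 \<le> w \<bar>z\<bar> * \<bar>z\<bar>\<^sup>2" using A1_facts(1)[OF assms] by simp
  have "(\<lambda>z. w \<bar>z\<bar> * \<bar>z\<bar>\<^sup>2) absolutely_integrable_on UNIV"
    using nonnegative_absolutely_integrable_1[of _ UNIV] hi nn by blast
  then have "integrable lebesgue (\<lambda>z. w \<bar>z\<bar> * \<bar>z\<bar>\<^sup>2)"
    by (simp add: set_integrable_def)
  moreover have meas: "(\<lambda>z. w \<bar>z\<bar> * \<bar>z\<bar>\<^sup>2) \<in> borel_measurable borel"
  proof -
    have "(\<lambda>z. w (\<bar>0 - z\<bar> / 1)) \<in> borel_measurable borel" using w_meas[OF assms, of 1 0] by simp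
    then show ?thesis by simp
  qed
  then have meas': "(\<lambda>z. w \<bar>z\<bar> * \<bar>z\<bar>\<^sup>2) \<in> borel_measurable lborel" by simp
  ultimately show ii: "integrable lborel (\<lambda>z. w \<bar>z\<bar> * \<bar>z\<bar>\<^sup>2)"
    using integrable_completion[OF meas'] by simp
  show "(\<integral>z. w \<bar>z\<bar> * \<bar>z\<bar>\<^sup>2 \<partial>lborel) = 2"
    using integral_lborel[OF ii] hi by (simp add: integral_unique)
qed

lemma bdd_si:
  fixes h :: "real \<Rightarrow> real"
  assumes "h \<in> borel_measurable borel" "\<And>y. y \<in> {a..b} \<Longrightarrow> \<bar>h y\<bar> \<le> B"
  shows "set_integrable lborel {a..b} h"
  unfolding set_integrable_def
proof (rule Bochner_Integration.integrable_bound[where M=lborel and f="\<lambda>y. B * indicator {a..b} y"])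
  show "integrable lborel (\<lambda>y. B * indicator {a..b} y)"
    by (intro integrable_mult_right) (simp add: integrable_indicator_iff emeasure_lborel_Icc_eq)
  show "(\<lambda>x. indicator {a..b} x *\<^sub>R h x) \<in> borel_measurable lborel"
    using assms(1) by simp
  show "AE x in lborel. norm (indicator {a..b} x *\<^sub>R h x) \<le> norm (B * indicator {a..b} x)"
    using assms(2) by (intro AE_I2) (force simp: indicator_def abs_le_iff)
qed

lemma W_basic:
  assumes "A1 w" "d > 0"
  shows "\<And>y. 0 \<le> wdelta w d x y" "\<And>y. wdelta w d x y \<le> w 0 / d^3"
    "\<And>y. \<bar>x - y\<bar> \<ge> d \<Longrightarrow> wdelta w d x y = 0"
    "\<And>y. \<bar>x - y\<bar> \<le> d/2 \<Longrightarrow> w (1/2) / d^3 \<le> wdelta w d x y"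
    "(\<lambda>y. wdelta w d x y) \<in> borel_measurable borel"
proof -
  note F = A1_facts[OF assms(1)]
  fix y
  show "0 \<le> wdelta w d x y" unfolding wdelta_def using F(1) assms(2) by simp
  show "wdelta w d x y \<le> w 0 / d^3" unfolding wdelta_def using F(2)[of 0 "\<bar>x - y\<bar> / d"] assms(2)
    by (simp add: divide_right_mono)
  show "\<bar>x - y\<bar> \<ge> d \<Longrightarrow> wdelta w d x y = 0" unfolding wdelta_def using F(3) assms(2) by simp
  show "\<bar>x - y\<bar> \<le> d/2 \<Longrightarrow> w (1/2) / d^3 \<le> wdelta w d x y"
  proof -
    assume "\<bar>x - y\<bar> \<le> d/2"
    then have "\<bar>x - y\<bar> / d \<le> 1/2" using assms(2) by (simp add: divide_le_eq)
    then have "w (1/2) \<le> w (\<bar>x - y\<bar> / d)" using F(2) assms(2) by simp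
    then show ?thesis unfolding wdelta_def using assms(2) by (simp add: divide_right_mono)
  qed
next
  show "(\<lambda>y. wdelta w d x y) \<in> borel_measurable borel"
    unfolding wdelta_def using w_meas[OF assms] by measurable
qed

lemma W_si:
  assumes "A1 w" "d > 0" "h \<in> borel_measurable borel" "\<And>y. y \<in> {x-d..x+d} \<Longrightarrow> \<bar>h y\<bar> \<le> B"
  shows "set_integrable lborel {x-d..x+d} (\<lambda>y. h y * wdelta w d x y)"
proof (rule bdd_si)
  show "(\<lambda>y. h y * wdelta w d x y) \<in> borel_measurable borel"
    using assms(3) W_basic(5)[OF assms(1,2)] by measurable
  fix y assume "y \<in> {x-d..x+d}"
  then have "\<bar>h y\<bar> \<le> B" using assms(4) by auto
  moreover have "0 \<le> wdelta w d x y" "wdelta w d x y \<le> w 0 / d^3" using W_basic[OF assms(1,2)] by auto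
  ultimately have "\<bar>h y\<bar> * wdelta w d x y \<le> B * (w 0 / d^3)"
    by (intro mult_mono) auto
  then show "\<bar>h y * wdelta w d x y\<bar> \<le> B * (w 0 / d^3)"
    using \<open>0 \<le> wdelta w d x y\<close> by (simp add: abs_mult)
qed

lemma W_moment2:
  assumes "A1 w" "d > 0"
  shows "(LINT y:{x-d..x+d}|lborel. (y - x)^2 * wdelta w d x y) = 2"
proof -
  define om where "om z = w \<bar>z\<bar> * \<bar>z\<bar>\<^sup>2" for z
  define G where "G y = om ((y - x) / d) / d" for y
  have "(\<integral>y. G y \<partial>lborel) = \<bar>d\<bar> *\<^sub>R (\<integral>z. G (x + d * z) \<partial>lborel)"
    using lborel_integral_real_affine[of d G x] assms(2) by simp
  also have "(\<lambda>z. G (x + d * z)) = (\<lambda>z. om z / d)" using assms(2) by (auto simp: G_def)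
  also have "\<bar>d\<bar> *\<^sub>R (\<integral>z. om z / d \<partial>lborel) = 2"
    using omega_int[OF assms(1)] assms(2) by (simp add: om_def)
  finally have G2: "(\<integral>y. G y \<partial>lborel) = 2" .
  have "\<And>y. indicator {x-d..x+d} y *\<^sub>R ((y - x)^2 * wdelta w d x y) = G y"
  proof -
    fix y
    show "indicator {x-d..x+d} y *\<^sub>R ((y - x)^2 * wdelta w d x y) = G y"
    proof (cases "y \<in> {x-d..x+d}")
      case True
      have "(y - x)^2 * wdelta w d x y = w (\<bar>y - x\<bar>/d) * ((y-x)/d)^2 / d"
        unfolding wdelta_def using assms(2) by (simp add: field_simps power2_eq_square power3_eq_cube abs_minus_commute)
      then show ?thesis using True assms(2) by (simp add: G_def om_def abs_divide power_divide)
    next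
      case False
      then have "\<bar>y - x\<bar> / d \<ge> 1" using assms(2) by (auto simp: le_divide_eq)
      then have "w (\<bar>y - x\<bar> / d) = 0" using A1_facts(3)[OF assms(1)] by simp
      then show ?thesis using False assms(2) by (simp add: G_def om_def abs_divide)
    qed
  qed
  then show ?thesis using G2 unfolding set_lebesgue_integral_def by simp
qed

lemma W_moment1:
  assumes "A1 w" "d > 0"
  shows "(LINT y:{x-d..x+d}|lborel. (y - x) * wdelta w d x y) = 0"
proof -
  define G where "G y = indicator {x-d..x+d} y *\<^sub>R ((y - x) * wdelta w d x y)" for y
  have "(\<integral>y. G y \<partial>lborel) = \<bar>-1\<bar> *\<^sub>R (\<integral>z. G (2*x + (-1) * z) \<partial>lborel)"
    using lborel_integral_real_affine[of "-1" G "2*x"] by simp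
  also have "(\<lambda>z. G (2*x + (-1) * z)) = (\<lambda>z. - G z)"
  proof
    fix z
    have "(2*x + (-1) * z \<in> {x-d..x+d}) = (z \<in> {x-d..x+d})" by auto
    moreover have "wdelta w d x (2*x + (-1) * z) = wdelta w d x z" unfolding wdelta_def
      by (simp add: abs_minus_commute)
    ultimately show "G (2*x + (-1) * z) = - G z" unfolding G_def by (auto simp: indicator_def algebra_simps)
  qed
  finally have "(\<integral>y. G y \<partial>lborel) = - (\<integral>y. G y \<partial>lborel)" by simp
  then show ?thesis unfolding set_lebesgue_integral_def G_def by simp
qed

lemma W_moment0:
  assumes "A1 w" "d > 0"
  shows "w (1/2) / d^2 \<le> (LINT y:{x-d..x+d}|lborel. wdelta w d x y)"
    "(LINT y:{x-d..x+d}|lborel. wdelta w d x y) \<le> 2 * w 0 / d^2"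
proof -
  note B = W_basic[OF assms]
  have si: "set_integrable lborel {x-d..x+d} (\<lambda>y. 1 * wdelta w d x y)"
    by (rule W_si[OF assms, where B=1]) auto
  then have si': "set_integrable lborel {x-d..x+d} (\<lambda>y. wdelta w d x y)" by simp
  have "(LINT y:{x-d..x+d}|lborel. wdelta w d x y) \<le> (LINT y:{x-d..x+d}|lborel. w 0 / d^3)"
    by (rule set_integral_mono[OF si']) (auto intro: bdd_si B(2))
  also have "\<dots> = 2 * d * (w 0 / d^3)" using assms(2) by (simp add: set_integral_const)
  also have "\<dots> = 2 * w 0 / d^2" using assms(2) by (simp add: power2_eq_square power3_eq_cube)
  finally show "(LINT y:{x-d..x+d}|lborel. wdelta w d x y) \<le> 2 * w 0 / d^2" .
  have "(LINT y:{x-d..x+d}|lborel. indicator {x-d/2..x+d/2} y * (w (1/2) / d^3))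
        \<le> (LINT y:{x-d..x+d}|lborel. wdelta w d x y)"
  proof (rule set_integral_mono[OF _ si'])
    show "set_integrable lborel {x-d..x+d} (\<lambda>y. indicator {x-d/2..x+d/2} y * (w (1/2) / d^3))"
      by (rule bdd_si[where B="\<bar>w (1/2) / d^3\<bar>"]) (auto simp: indicator_def)
    fix y assume "y \<in> {x-d..x+d}"
    show "indicator {x-d/2..x+d/2} y * (w (1/2) / d^3) \<le> wdelta w d x y"
      using B(1)[of x y] B(4)[of x y] by (auto simp: indicator_def abs_le_iff, linarith)
  qed
  also have "(LINT y:{x-d..x+d}|lborel. indicator {x-d/2..x+d/2} y * (w (1/2) / d^3))
     = (LINT y:{x-d/2..x+d/2}|lborel. (w (1/2) / d^3))"
    unfolding set_lebesgue_integral_def using assms(2)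
    by (intro Bochner_Integration.integral_cong) (auto simp: indicator_def)
  also have "\<dots> = d * (w (1/2) / d^3)" using assms(2) by (simp add: set_integral_const)
  finally show "w (1/2) / d^2 \<le> (LINT y:{x-d..x+d}|lborel. wdelta w d x y)"
    using assms(2) by (simp add: power2_eq_square power3_eq_cube)
qed

lemma level_bound:
  fixes G G' :: "real \<Rightarrow> real" and K :: real
  assumes cont: "continuous_on {min x y..max x y} G"
    and der: "\<And>s. min x y < s \<Longrightarrow> s < max x y \<Longrightarrow> (G has_real_derivative G' s) (at s)"
    and bd: "\<And>s. min x y < s \<Longrightarrow> s < max x y \<Longrightarrow> \<bar>G' s\<bar> \<le> K * \<bar>s - x\<bar>^n"
    and G0: "G x = 0"
  shows "\<bar>G y\<bar> \<le> K * \<bar>y - x\<bar>^(Suc n) / real (Suc n)"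
proof (cases "x \<le> y")
  case True
  have *: "(\<lambda>s. K * (s - x)^(Suc n) / real (Suc n) - e * G s) x
          \<le> (\<lambda>s. K * (s - x)^(Suc n) / real (Suc n) - e * G s) y" if e: "\<bar>e\<bar> = 1" for e
  proof (rule DERIV_nonneg_imp_increasing_open[OF True])
    show "continuous_on {x..y} (\<lambda>s. K * (s - x)^(Suc n) / real (Suc n) - e * G s)"
      using cont True by (intro continuous_intros) auto
    fix s assume s: "x < s" "s < y"
    have "((\<lambda>s. K * (s - x)^(Suc n) / real (Suc n) - e * G s) has_real_derivative
            K * (s - x)^n - e * G' s) (at s)"
      using der[of s] s True
      apply (auto intro!: derivative_eq_intros simp del: of_nat_Suc)
      by (cases n; simp add: field_simps)
    moreover have "e * G' s \<le> K * (s - x)^n"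
    proof -
      have "e * G' s \<le> \<bar>e * G' s\<bar>" by simp
      also have "\<dots> = \<bar>G' s\<bar>" using e by (simp add: abs_mult)
      also have "\<dots> \<le> K * \<bar>s - x\<bar>^n" using bd[of s] s True by auto
      finally show ?thesis using s by simp
    qed
    ultimately show "\<exists>yy. ((\<lambda>s. K * (s - x)^(Suc n) / real (Suc n) - e * G s) has_real_derivative yy) (at s) \<and> 0 \<le> yy"
      by auto
  qed
  have a: "G y \<le> K * (y - x)^(Suc n) / real (Suc n)" using *[of 1] G0 by simp
  have b: "- G y \<le> K * (y - x)^(Suc n) / real (Suc n)" using *[of "-1"] G0 by simp
  show ?thesis using a b True by (simp add: abs_le_iff)
next
  case False
  then have yx: "y \<le> x" by simp
  have *: "(\<lambda>s. K * (x - s)^(Suc n) / real (Suc n) - e * G s) x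
          \<le> (\<lambda>s. K * (x - s)^(Suc n) / real (Suc n) - e * G s) y" if e: "\<bar>e\<bar> = 1" for e
  proof (rule DERIV_nonpos_imp_decreasing_open[OF yx])
    show "continuous_on {y..x} (\<lambda>s. K * (x - s)^(Suc n) / real (Suc n) - e * G s)"
      using cont yx by (intro continuous_intros) auto
    fix s assume s: "y < s" "s < x"
    have "((\<lambda>s. K * (x - s)^(Suc n) / real (Suc n) - e * G s) has_real_derivative
            - K * (x - s)^n - e * G' s) (at s)"
      using der[of s] s yx
      apply (auto intro!: derivative_eq_intros simp del: of_nat_Suc)
      by (cases n; simp add: field_simps)
    moreover have "- e * G' s \<le> K * (x - s)^n"
    proof -
      have "- e * G' s \<le> \<bar>e * G' s\<bar>" by simp
      also have "\<dots> = \<bar>G' s\<bar>" using e by (simp add: abs_mult)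
      also have "\<dots> \<le> K * \<bar>s - x\<bar>^n" using bd[of s] s yx by auto
      finally show ?thesis using s by simp
    qed
    ultimately show "\<exists>yy. ((\<lambda>s. K * (x - s)^(Suc n) / real (Suc n) - e * G s) has_real_derivative yy) (at s) \<and> yy \<le> 0"
      by auto
  qed
  have a: "G y \<le> K * (x - y)^(Suc n) / real (Suc n)" using *[of 1] G0 by simp
  have b: "- G y \<le> K * (x - y)^(Suc n) / real (Suc n)" using *[of "-1"] G0 by simp
  show ?thesis using a b yx by (simp add: abs_le_iff abs_minus_commute)
qed

lemma taylor3:
  fixes D :: "nat \<Rightarrow> real \<Rightarrow> real"
  assumes der: "\<forall>i<4. \<forall>x\<in>{0..1}. (D i has_real_derivative D (Suc i) x) (at x within {0..1})"
    and cont: "\<forall>i\<le>4. continuous_on {0..1} (D i)"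
    and M: "\<forall>t\<in>{0..1}. \<bar>D 3 t\<bar> \<le> M"
    and x: "x \<in> {0..1}"
  shows "\<forall>z\<in>{0..1}. \<bar>D 0 z - D 0 x - D 1 x * (z - x) - D 2 x * (z - x)^2 / 2\<bar> \<le> M * \<bar>z - x\<bar>^3 / 6"
proof -
  have dat: "(D i has_real_derivative D (Suc i) s) (at s)" if "i < 4" "0 < s" "s < 1" for i s
  proof -
    have "(D i has_real_derivative D (Suc i) s) (at s within {0..1})" using der that by auto
    moreover have "at s within {0..1} = at s" using that by (intro at_within_Icc_at) auto
    ultimately show ?thesis by simp
  qed
  have sub: "{min x z..max x z} \<subseteq> {0..1}" if "z \<in> {0..1}" for z using x that by auto
  have int: "0 < s \<and> s < 1" if "z \<in> {0..1}" "min x z < s" "s < max x z" for z s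
    using x that by auto
  have L1: "\<bar>D 2 z - D 2 x\<bar> \<le> M * \<bar>z - x\<bar>^(Suc 0) / real (Suc 0)" if z: "z \<in> {0..1}" for z
  proof (rule level_bound[where G="\<lambda>s. D 2 s - D 2 x" and G'="D 3", of x z M 0])
    show "continuous_on {min x z..max x z} (\<lambda>s. D 2 s - D 2 x)"
      using cont sub[OF z] by (intro continuous_intros continuous_on_subset[where t="{min x z..max x z}" and s="{0..1}"]) auto
    fix s assume s: "min x z < s" "s < max x z"
    show "((\<lambda>s. D 2 s - D 2 x) has_real_derivative D 3 s) (at s)"
      using dat[of 2 s] int[OF z s] by (auto intro!: derivative_eq_intros simp: numeral_eq_Suc)
    show "\<bar>D 3 s\<bar> \<le> M * \<bar>s - x\<bar>^0" using M int[OF z s] by auto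
  qed simp
  have L2: "\<bar>D 1 z - D 1 x - D 2 x * (z - x)\<bar> \<le> M * \<bar>z - x\<bar>^(Suc 1) / real (Suc 1)" if z: "z \<in> {0..1}" for z
  proof (rule level_bound[where G="\<lambda>s. D 1 s - D 1 x - D 2 x * (s - x)" and G'="\<lambda>s. D 2 s - D 2 x", of x z M 1])
    show "continuous_on {min x z..max x z} (\<lambda>s. D 1 s - D 1 x - D 2 x * (s - x))"
      using cont sub[OF z] by (intro continuous_intros continuous_on_subset[where t="{min x z..max x z}" and s="{0..1}"]) auto
    fix s assume s: "min x z < s" "s < max x z"
    show "((\<lambda>s. D 1 s - D 1 x - D 2 x * (s - x)) has_real_derivative D 2 s - D 2 x) (at s)"
      using dat[of 1 s] int[OF z s] by (auto intro!: derivative_eq_intros simp: numeral_eq_Suc)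
    have "s \<in> {0..1}" using int[OF z s] by auto
    then show "\<bar>D 2 s - D 2 x\<bar> \<le> M * \<bar>s - x\<bar>^1" using L1[of s] by simp
  qed simp
  show ?thesis
  proof
    fix z :: real assume z: "z \<in> {0..1}"
    have "\<bar>D 0 z - D 0 x - D 1 x * (z - x) - D 2 x * (z - x)^2 / 2\<bar> \<le> (M/2) * \<bar>z - x\<bar>^(Suc 2) / real (Suc 2)"
    proof (rule level_bound[where G="\<lambda>s. D 0 s - D 0 x - D 1 x * (s - x) - D 2 x * (s - x)^2 / 2"
          and G'="\<lambda>s. D 1 s - D 1 x - D 2 x * (s - x)", of x z "M/2" 2])
      show "continuous_on {min x z..max x z} (\<lambda>s. D 0 s - D 0 x - D 1 x * (s - x) - D 2 x * (s - x)^2 / 2)"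
        using cont sub[OF z] by (intro continuous_intros continuous_on_subset[where t="{min x z..max x z}" and s="{0..1}"]) auto
      fix s assume s: "min x z < s" "s < max x z"
      show "((\<lambda>s. D 0 s - D 0 x - D 1 x * (s - x) - D 2 x * (s - x)^2 / 2) has_real_derivative D 1 s - D 1 x - D 2 x * (s - x)) (at s)"
        using dat[of 0 s] int[OF z s] by (auto intro!: derivative_eq_intros simp: power2_eq_square field_simps numeral_eq_Suc)
      have "s \<in> {0..1}" using int[OF z s] by auto
      then show "\<bar>D 1 s - D 1 x - D 2 x * (s - x)\<bar> \<le> M / 2 * \<bar>s - x\<bar>^2" using L2[of s] by (simp add: power2_eq_square)
    qed simp
    then show "\<bar>D 0 z - D 0 x - D 1 x * (z - x) - D 2 x * (z - x)^2 / 2\<bar> \<le> M * \<bar>z - x\<bar>^3 / 6"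
      by (simp add: numeral_eq_Suc)
  qed
qed

lemma W_si_cont:
  assumes "A1 w" "d > 0" "continuous_on UNIV h"
  shows "set_integrable lborel {x-d..x+d} (\<lambda>y. h y * wdelta w d x y)"
proof -
  have "compact (h ` {x-d..x+d})"
    using assms(3) by (intro compact_continuous_image) (auto intro: continuous_on_subset)
  then obtain B where "\<forall>z\<in>h ` {x-d..x+d}. norm z \<le> B" using compact_imp_bounded bounded_iff by metis
  then have B: "\<And>y. y \<in> {x-d..x+d} \<Longrightarrow> \<bar>h y\<bar> \<le> B" by auto
  show ?thesis
    by (rule W_si[OF assms(1,2) _ B]) (use assms(3) borel_measurable_continuous_onI in auto)
qed

lemma barrier:
  fixes D :: "nat \<Rightarrow> real \<Rightarrow> real"
  assumes hw: "A1 w" and d: "0 < d" "d < 1/2"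
    and der: "\<forall>i<4. \<forall>x\<in>{0..1}. (D i has_real_derivative D (Suc i) x) (at x within {0..1})"
    and cont: "\<forall>i\<le>4. continuous_on {0..1} (D i)"
    and M0: "\<forall>t\<in>{0..1}. \<bar>D 0 t\<bar> \<le> M0"
    and M1: "\<forall>t\<in>{0..1}. \<bar>D 1 t\<bar> \<le> M1"
    and M2: "\<forall>t\<in>{0..1}. \<bar>D 2 t\<bar> \<le> M2"
    and M3: "\<forall>t\<in>{0..1}. \<bar>D 3 t\<bar> \<le> M3"
    and bc: "D 0 0 = 0" "D 0 1 = 0"
    and x: "x \<in> {0<..<1}"
    and fx: "fx = - D 2 x"
    and ut: "ut = (\<lambda>y. indicator {0..1} y * D 0 y)"
    and Phi: "Phi = (\<lambda>y. (M3 * w 0 / 6 + 1) * d * ((y + d) * (1 + d - y)) + (M1 + M2) * (d - (max 0 (-y) + max 0 (y - 1))))"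
  shows "\<bar>fx - (LINT y:{x-d..x+d}|lborel. (ut x - ut y) * wdelta w d x y)\<bar> + d
           \<le> (LINT y:{x-d..x+d}|lborel. (Phi x - Phi y) * wdelta w d x y)"
proof -
  define J where "J = {x-d..x+d}"
  define W where "W y = wdelta w d x y" for y
  define a where "a = M3 * w 0 / 6 + 1"
  define K where "K = M1 + M2"
  define g where "g y = max 0 (-y) + max 0 (y - 1)" for y :: real
  define P where "P y = D 0 x + D 1 x * (y - x) + D 2 x * (y - x)^2 / 2" for y
  define Dd where "Dd y = ut y - P y" for y
  have M1p: "M1 \<ge> 0" using M1 by (metis abs_ge_zero atLeastAtMost_iff order_trans zero_le_one order_refl)
  have M2p: "M2 \<ge> 0" using M2 by (metis abs_ge_zero atLeastAtMost_iff order_trans zero_le_one order_refl)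
  have M3p: "M3 \<ge> 0" using M3 by (metis abs_ge_zero atLeastAtMost_iff order_trans zero_le_one order_refl)
  have Kp: "K \<ge> 0" using M1p M2p K_def by simp
  have w0: "w 0 \<ge> 0" using A1_facts(1)[OF hw] by simp
  have x01: "x \<in> {0..1}" using x by auto
  have tay: "\<forall>z\<in>{0..1}. \<bar>D 0 z - P z\<bar> \<le> M3 * \<bar>z - x\<bar>^3 / 6"
    using taylor3[OF der cont M3 x01] unfolding P_def by (simp add: algebra_simps)
  have endpt: "\<bar>P y\<bar> \<le> M3 * d^3 / 6 + K * \<bar>y - b\<bar>"
    if b: "b \<in> {0..1}" "D 0 b = 0" "\<bar>b - x\<bar> \<le> d" "\<bar>y - x\<bar> \<le> d" for y b
  proof -
    have "\<bar>D 0 b - P b\<bar> \<le> M3 * \<bar>b - x\<bar>^3 / 6" using tay b(1) by auto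
    also have "\<dots> \<le> M3 * d^3 / 6"
      using b(3) M3p by (intro divide_right_mono mult_left_mono power_mono) auto
    finally have e1: "\<bar>P b\<bar> \<le> M3 * d^3 / 6" using b(2) by simp
    have id: "P y - P b = (y - b) * (D 1 x + D 2 x * (y + b - 2 * x) / 2)"
      unfolding P_def by (simp add: power2_eq_square field_simps)
    have "\<bar>y + b - 2 * x\<bar> \<le> 1" using b d by (simp add: abs_le_iff)
    moreover have "\<bar>D 2 x\<bar> \<le> M2" using M2 x01 by auto
    ultimately have "\<bar>D 2 x\<bar> * \<bar>y + b - 2 * x\<bar> \<le> M2 * 1" by (intro mult_mono) auto
    then have "\<bar>D 2 x * (y + b - 2 * x) / 2\<bar> \<le> M2"
      using M2p by (simp add: abs_mult)
    moreover have "\<bar>D 1 x\<bar> \<le> M1" using M1 x01 by auto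
    ultimately have "\<bar>D 1 x + D 2 x * (y + b - 2 * x) / 2\<bar> \<le> K"
      unfolding K_def by (simp add: abs_le_iff)
    then have "\<bar>P y - P b\<bar> \<le> \<bar>y - b\<bar> * K" unfolding id abs_mult by (intro mult_left_mono) auto
    then have "\<bar>P y\<bar> \<le> \<bar>P b\<bar> + \<bar>y - b\<bar> * K" by linarith
    then show ?thesis using e1 by (simp add: mult.commute)
  qed
  have ptw: "\<bar>Dd y\<bar> \<le> M3 * d^3 / 6 + K * g y" if y: "y \<in> J" for y
  proof -
    have yx: "\<bar>y - x\<bar> \<le> d" using y unfolding J_def by auto
    consider "y \<in> {0..1}" | "y < 0" | "y > 1" by force
    then show ?thesis
    proof cases
      case 1
      have "\<bar>Dd y\<bar> = \<bar>D 0 y - P y\<bar>" using 1 unfolding Dd_def ut by simp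
      also have "\<dots> \<le> M3 * \<bar>y - x\<bar>^3 / 6" using tay 1 by auto
      also have "\<dots> \<le> M3 * d^3 / 6"
        using yx M3p by (intro divide_right_mono mult_left_mono power_mono) auto
      also have "\<dots> \<le> M3 * d^3 / 6 + K * g y" using Kp by (simp add: g_def)
      finally show ?thesis .
    next
      case 2
      have "\<bar>Dd y\<bar> = \<bar>P y\<bar>" using 2 unfolding Dd_def ut by simp
      also have "\<dots> \<le> M3 * d^3 / 6 + K * \<bar>y - 0\<bar>"
        by (rule endpt) (use bc 2 yx x in auto)
      also have "\<bar>y - 0\<bar> = g y" using 2 by (simp add: g_def)
      finally show ?thesis .
    next
      case 3
      have "\<bar>Dd y\<bar> = \<bar>P y\<bar>" using 3 unfolding Dd_def ut by simp
      also have "\<dots> \<le> M3 * d^3 / 6 + K * \<bar>y - 1\<bar>"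
        by (rule endpt) (use bc 3 yx x in auto)
      also have "\<bar>y - 1\<bar> = g y" using 3 by (simp add: g_def)
      finally show ?thesis .
    qed
  qed
  have gJ: "0 \<le> g y \<and> g y \<le> d" if "y \<in> J" for y using that x unfolding g_def J_def by auto
  have dp: "d > 0" using d by simp
  note si = W_si[OF hw dp, of _ x, folded J_def W_def]
  note sic = W_si_cont[OF hw dp, of _ x, folded J_def W_def]
  have utm: "ut \<in> borel_measurable borel"
    unfolding ut using borel_measurable_continuous_on_indicator[of "{0..1}" "D 0"] cont by simp
  have si_Dd: "set_integrable lborel J (\<lambda>y. Dd y * W y)"
  proof (rule si)
    show "Dd \<in> borel_measurable borel" unfolding Dd_def P_def using utm by measurable
    fix y assume "y \<in> J"
    then show "\<bar>Dd y\<bar> \<le> M3 * d^3 / 6 + K * d" using ptw gJ Kp by (smt (verit) mult_left_mono)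
  qed
  have si_g: "set_integrable lborel J (\<lambda>y. g y * W y)"
    unfolding g_def by (rule sic) (intro continuous_intros)
  have si_1: "set_integrable lborel J (\<lambda>y. (y - x) * W y)"
    by (rule sic) (intro continuous_intros)
  have si_2: "set_integrable lborel J (\<lambda>y. (y - x)^2 * W y)"
    by (rule sic) (intro continuous_intros)
  have si_0: "set_integrable lborel J (\<lambda>y. W y)"
    using sic[of "\<lambda>y. 1"] by simp
  have mom0: "(LINT y:J|lborel. W y) \<le> 2 * w 0 / d^2"
    using W_moment0(2)[OF hw dp, of x] unfolding J_def W_def .
  have mom1: "(LINT y:J|lborel. (y - x) * W y) = 0"
    using W_moment1[OF hw dp, of x] unfolding J_def W_def .
  have mom2: "(LINT y:J|lborel. (y - x)^2 * W y) = 2"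
    using W_moment2[OF hw dp, of x] unfolding J_def W_def .
  have utx: "ut x = D 0 x" using x unfolding ut by simp
  have C1: "(LINT y:J|lborel. (ut x - ut y) * W y) = - (LINT y:J|lborel. Dd y * W y) - D 2 x"
  proof -
    have "(LINT y:J|lborel. (ut x - ut y) * W y) = (LINT y:J|lborel. - (Dd y * W y) - D 1 x * ((y - x) * W y) - D 2 x / 2 * ((y - x)^2 * W y))"
      by (rule set_lebesgue_integral_cong) (auto simp: J_def Dd_def P_def utx algebra_simps)
    also have "\<dots> = - (LINT y:J|lborel. Dd y * W y) - D 1 x * (LINT y:J|lborel. (y - x) * W y) - D 2 x / 2 * (LINT y:J|lborel. (y - x)^2 * W y)"
    proof -
      have i1: "set_integrable lborel J (\<lambda>y. - (Dd y * W y))" using si_Dd unfolding set_integrable_def by simp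
      have i2: "set_integrable lborel J (\<lambda>y. D 1 x * ((y - x) * W y))" using si_1 by simp
      have i3: "set_integrable lborel J (\<lambda>y. D 2 x / 2 * ((y - x)^2 * W y))" using si_2 by simp
      show ?thesis
        apply (subst set_integral_diff(2)[OF set_integral_diff(1)[OF i1 i2] i3])
        apply (subst set_integral_diff(2)[OF i1 i2])
        apply (subst set_integral_uminus[OF si_Dd])
        apply (subst set_integral_mult_right)+
        by simp
    qed
    finally show ?thesis using mom1 mom2 by simp
  qed
  define B where "B y = M3 * d^3 / 6 + K * g y" for y
  have si_B: "set_integrable lborel J (\<lambda>y. B y * W y)"
    unfolding B_def g_def by (rule sic) (intro continuous_intros)
  have IB: "(LINT y:J|lborel. B y * W y) = M3 * d^3 / 6 * (LINT y:J|lborel. W y) + K * (LINT y:J|lborel. g y * W y)"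
  proof -
    have "(LINT y:J|lborel. B y * W y) = (LINT y:J|lborel. M3 * d^3 / 6 * W y + K * (g y * W y))"
      by (rule set_lebesgue_integral_cong) (auto simp: J_def B_def algebra_simps)
    also have "\<dots> = M3 * d^3 / 6 * (LINT y:J|lborel. W y) + K * (LINT y:J|lborel. g y * W y)"
      using si_0 si_g by simp
    finally show ?thesis .
  qed
  have Wn: "0 \<le> W y" for y using W_basic(1)[OF hw dp] unfolding W_def by auto
  have up: "(LINT y:J|lborel. Dd y * W y) \<le> (LINT y:J|lborel. B y * W y)"
  proof (rule set_integral_mono[OF si_Dd si_B])
    fix y assume "y \<in> J"
    then have "Dd y \<le> B y" using ptw[of y] unfolding B_def by linarith
    then show "Dd y * W y \<le> B y * W y" using Wn[of y] by (simp add: mult_right_mono)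
  qed
  have lo: "(LINT y:J|lborel. - (B y * W y)) \<le> (LINT y:J|lborel. Dd y * W y)"
  proof (rule set_integral_mono[OF _ si_Dd])
    show "set_integrable lborel J (\<lambda>y. - (B y * W y))" using si_B unfolding set_integrable_def by simp
    fix y assume "y \<in> J"
    then have "- B y \<le> Dd y" using ptw[of y] unfolding B_def by linarith
    then have "(- B y) * W y \<le> Dd y * W y" using Wn[of y] by (rule mult_right_mono)
    then show "- (B y * W y) \<le> Dd y * W y" by simp
  qed
  have absDd: "\<bar>LINT y:J|lborel. Dd y * W y\<bar> \<le> (LINT y:J|lborel. B y * W y)"
    using up lo set_integral_uminus[OF si_B] by (simp add: abs_le_iff)
  have gx: "g x = 0" using x unfolding g_def by auto
  have C3: "(LINT y:J|lborel. (Phi x - Phi y) * W y) = 2 * a * d + K * (LINT y:J|lborel. g y * W y)"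
  proof -
    have "(LINT y:J|lborel. (Phi x - Phi y) * W y) = (LINT y:J|lborel. a * d * ((y - x)^2 * W y) + a * d * (2 * x - 1) * ((y - x) * W y) + K * (g y * W y))"
    proof (rule set_lebesgue_integral_cong)
      show "J \<in> sets lborel" unfolding J_def by simp
      show "\<forall>y. y \<in> J \<longrightarrow> (Phi x - Phi y) * W y = a * d * ((y - x)^2 * W y) + a * d * (2 * x - 1) * ((y - x) * W y) + K * (g y * W y)"
      proof (intro allI impI)
        fix y
        have P': "Phi = (\<lambda>y. a * d * ((y + d) * (1 + d - y)) + K * (d - g y))"
          unfolding Phi a_def K_def g_def by simp
        have e: "(x + d) * (1 + d - x) - (y + d) * (1 + d - y) = (y - x)^2 + (2*x - 1)*(y - x)"
          by (simp add: power2_eq_square algebra_simps)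
        have "Phi x - Phi y = a * d * ((x + d) * (1 + d - x) - (y + d) * (1 + d - y)) + K * g y"
          unfolding P' using gx by (simp add: algebra_simps)
        also have "\<dots> = a * d * ((y - x)^2 + (2*x - 1)*(y - x)) + K * g y" using e by simp
        finally have eq: "Phi x - Phi y = a * d * ((y - x)^2 + (2*x - 1)*(y - x)) + K * g y" .
        show "(Phi x - Phi y) * W y = a * d * ((y - x)^2 * W y) + a * d * (2 * x - 1) * ((y - x) * W y) + K * (g y * W y)"
          by (subst eq) (simp add: algebra_simps)
      qed
    qed
    also have "\<dots> = a * d * (LINT y:J|lborel. (y - x)^2 * W y) + a * d * (2 * x - 1) * (LINT y:J|lborel. (y - x) * W y) + K * (LINT y:J|lborel. g y * W y)"
      using si_1 si_2 si_g by simp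
    finally show ?thesis using mom1 mom2 by simp
  qed
  have "M3 * d^3 / 6 * (LINT y:J|lborel. W y) \<le> M3 * d^3 / 6 * (2 * w 0 / d^2)"
    using mom0 M3p dp by (intro mult_left_mono) auto
  also have "\<dots> = M3 * w 0 * d / 3" using dp by (simp add: power2_eq_square power3_eq_cube field_simps)
  finally have "M3 * d^3 / 6 * (LINT y:J|lborel. W y) \<le> M3 * w 0 * d / 3" .
  then have "\<bar>fx - (LINT y:J|lborel. (ut x - ut y) * W y)\<bar> + d \<le> (LINT y:J|lborel. (Phi x - Phi y) * W y)"
  proof -
    have e1: "fx - (LINT y:J|lborel. (ut x - ut y) * W y) = (LINT y:J|lborel. Dd y * W y)"
      using C1 fx by simp
    have e2: "2 * a * d = M3 * w 0 * d / 3 + 2 * d" by (simp add: a_def algebra_simps)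
    show ?thesis unfolding e1 C3 using absDd IB e2 \<open>M3 * d^3 / 6 * (LINT y:J|lborel. W y) \<le> M3 * w 0 * d / 3\<close> dp
      by linarith
  qed
  then show ?thesis unfolding J_def W_def .
qed

lemma maxp_step:
  fixes V :: "real \<Rightarrow> real"
  assumes hw: "A1 w" and dp: "0 < d"
    and Vm: "V \<in> borel_measurable borel"
    and collar: "\<And>y. (y \<in> {-d<..0} \<or> y \<in> {1..<1+d}) \<Longrightarrow> V y \<le> 0"
    and step: "AE x in lborel. x \<in> {0<..<1} \<longrightarrow>
        set_integrable lborel {x-d..x+d} (\<lambda>y. (V x - V y) * wdelta w d x y) \<and>
        (LINT y:{x-d..x+d}|lborel. (V x - V y) * wdelta w d x y) \<le> - d"
    and m: "0 \<le> m" and hyp: "AE x in lborel. x \<in> {0<..<1} \<longrightarrow> V x \<le> m"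
  shows "AE x in lborel. x \<in> {0<..<1} \<longrightarrow> V x \<le> m - d / (2 * w 0 / d^2)"
proof -
  have wh: "w (1/2) > 0" using A1_facts(4)[OF hw] .
  have w0: "w (1/2) \<le> w 0" using A1_facts(2)[OF hw, of 0 "1/2"] by simp
  show ?thesis
  using step hyp
  proof (eventually_elim)
    case (elim x)
    show ?case
    proof
      assume x: "x \<in> {0<..<1}"
      define J where "J = {x-d..x+d}"
      define W where "W y = wdelta w d x y" for y
      have si: "set_integrable lborel J (\<lambda>y. (V x - V y) * W y)"
        and S: "(LINT y:J|lborel. (V x - V y) * W y) \<le> - d" using elim x unfolding J_def W_def by auto
      have si0: "set_integrable lborel J (\<lambda>y. W y)"
        using W_si_cont[OF hw dp, of "\<lambda>y. 1" x] unfolding J_def W_def by simp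
      have six: "set_integrable lborel J (\<lambda>y. V x * W y)" using si0 by simp
      have siy: "set_integrable lborel J (\<lambda>y. V y * W y)"
      proof -
        have "set_integrable lborel J (\<lambda>y. V x * W y - (V x - V y) * W y)"
          using set_integral_diff(1)[OF six si] .
        then show ?thesis by (simp add: algebra_simps)
      qed
      have eqS: "(LINT y:J|lborel. (V x - V y) * W y) = V x * (LINT y:J|lborel. W y) - (LINT y:J|lborel. V y * W y)"
      proof -
        have "(LINT y:J|lborel. (V x - V y) * W y) = (LINT y:J|lborel. V x * W y - V y * W y)"
          by (simp add: algebra_simps)
        also have "\<dots> = (LINT y:J|lborel. V x * W y) - (LINT y:J|lborel. V y * W y)"
          using set_integral_diff(2)[OF six siy] .
        finally show ?thesis by simp
      qed
      have Wn: "0 \<le> W y" for y using W_basic(1)[OF hw dp] unfolding W_def by auto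
      have AEJ: "AE y \<in> J in lborel. V y * W y \<le> m * W y"
        using hyp
      proof (eventually_elim)
        case (elim y)
        show ?case
        proof
          assume y: "y \<in> J"
          have "V y \<le> m"
          proof (cases "y \<in> {0<..<1}")
            case True then show ?thesis using elim by auto
          next
            case False
            then have "y \<in> {-d<..0} \<or> y \<in> {1..<1+d}" using y x unfolding J_def by auto
            then show ?thesis using collar m by fastforce
          qed
          then show "V y * W y \<le> m * W y" using Wn by (simp add: mult_right_mono)
        qed
      qed
      have "(LINT y:J|lborel. V y * W y) \<le> (LINT y:J|lborel. m * W y)"
        by (rule set_integral_mono_AE[OF siy _ AEJ]) (use si0 in simp)
      then have le: "(LINT y:J|lborel. V y * W y) \<le> m * (LINT y:J|lborel. W y)" by simp
      define c where "c = (LINT y:J|lborel. W y)"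
      have c1: "w (1/2) / d^2 \<le> c" using W_moment0(1)[OF hw dp, of x] unfolding c_def J_def W_def .
      have c2: "c \<le> 2 * w 0 / d^2" using W_moment0(2)[OF hw dp, of x] unfolding c_def J_def W_def .
      have cp: "c > 0" using c1 wh dp by (smt (verit) divide_pos_pos zero_less_power)
      have "(V x - m) * c \<le> - d" using S eqS le unfolding c_def by (simp add: algebra_simps)
      then have "V x - m \<le> (- d) / c" using cp by (subst pos_le_divide_eq) auto
      also have "\<dots> = - (d / c)" by simp
      also have "\<dots> \<le> - (d / (2 * w 0 / d^2))"
      proof -
        have "d / (2 * w 0 / d^2) \<le> d / c" using cp c2 dp wh w0 by (intro divide_left_mono) auto
        then show ?thesis by simp
      qed
      also have "\<dots> = - d / (2 * w 0 / d^2)" by simp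
      finally show "V x \<le> m - d / (2 * w 0 / d^2)" by simp
    qed
  qed
qed

lemma maxp:
  fixes V :: "real \<Rightarrow> real"
  assumes hw: "A1 w" and dp: "0 < d"
    and Vm: "V \<in> borel_measurable borel"
    and collar: "\<And>y. (y \<in> {-d<..0} \<or> y \<in> {1..<1+d}) \<Longrightarrow> V y \<le> 0"
    and step: "AE x in lborel. x \<in> {0<..<1} \<longrightarrow>
        set_integrable lborel {x-d..x+d} (\<lambda>y. (V x - V y) * wdelta w d x y) \<and>
        (LINT y:{x-d..x+d}|lborel. (V x - V y) * wdelta w d x y) \<le> - d"
    and init: "AE x in lborel. x \<in> {0<..<1} \<longrightarrow> V x \<le> m0"
  shows "AE x in lborel. x \<in> {0<..<1} \<longrightarrow> V x \<le> 0"
proof -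
  define eta where "eta = d / (2 * w 0 / d^2)"
  have wh: "w (1/2) > 0" using A1_facts(4)[OF hw] .
  have w0: "w (1/2) \<le> w 0" using A1_facts(2)[OF hw, of 0 "1/2"] by simp
  have etap: "eta > 0" unfolding eta_def using dp wh w0 by simp
  define m1 where "m1 = max m0 0"
  have it: "AE x in lborel. x \<in> {0<..<1} \<longrightarrow> V x \<le> max 0 (m1 - real n * eta)" for n
  proof (induction n)
    case 0
    show ?case using init by eventually_elim (auto simp: m1_def)
  next
    case (Suc n)
    have "AE x in lborel. x \<in> {0<..<1} \<longrightarrow> V x \<le> max 0 (m1 - real n * eta) - eta"
      using maxp_step[OF hw dp Vm collar step _ Suc.IH] unfolding eta_def by simp
    then show ?case
      by eventually_elim (use etap in \<open>auto simp: algebra_simps max_def split: if_splits\<close>)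
  qed
  obtain n :: nat where "m1 / eta < real n" using reals_Archimedean2 by blast
  then have "m1 \<le> real n * eta" using etap by (simp add: divide_less_eq less_imp_le)
  then have "max 0 (m1 - real n * eta) = 0" by simp
  then show ?thesis using it[of n] by simp
qed

lemma L1_of_L2:
  fixes U :: "real \<Rightarrow> real"
  assumes Um: "U \<in> borel_measurable borel"
    and L2: "set_integrable lborel {0<..<1} (\<lambda>x. (U x)\<^sup>2)"
  shows "set_integrable lborel {0<..<1} (\<lambda>x. \<bar>U x\<bar>)"
proof -
  have i1: "set_integrable lborel {0<..<1::real} (\<lambda>x. 1)"
    unfolding set_integrable_def by (simp add: integrable_indicator_iff)
  have "set_integrable lborel {0<..<1} (\<lambda>x. 1 + (U x)\<^sup>2)" using set_integral_add(1)[OF i1 L2] .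
  then show ?thesis
    unfolding set_integrable_def
  proof (rule Bochner_Integration.integrable_bound)
    show "(\<lambda>x. indicator {0<..<1} x *\<^sub>R \<bar>U x\<bar>) \<in> borel_measurable lborel" using Um by simp
    have "\<bar>t\<bar> \<le> 1 + t\<^sup>2" for t :: real
    proof (cases "\<bar>t\<bar> \<le> 1")
      case True then show ?thesis by (simp add: add_increasing2)
    next
      case False
      then have "\<bar>t\<bar> * 1 \<le> \<bar>t\<bar> * \<bar>t\<bar>" by (intro mult_left_mono) auto
      then show ?thesis by (simp add: power2_eq_square abs_mult_self_eq)
    qed
    then show "AE x in lborel. norm (indicator {0<..<1} x *\<^sub>R \<bar>U x\<bar>) \<le> norm (indicator {0<..<1} x *\<^sub>R (1 + (U x)\<^sup>2))"
      by (intro AE_I2) (auto simp: indicator_def)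
  qed
qed

lemma ud_bound:
  fixes U :: "real \<Rightarrow> real"
  assumes hw: "A1 w" and dp: "0 < d"
    and Um: "U \<in> borel_measurable borel"
    and L1: "set_integrable lborel {0<..<1} (\<lambda>x. \<bar>U x\<bar>)"
    and collar: "\<And>y. (y \<in> {-d<..0} \<or> y \<in> {1..<1+d}) \<Longrightarrow> U y = 0"
    and x: "x \<in> {0<..<1}"
    and si: "set_integrable lborel {x-d..x+d} (\<lambda>y. (U x - U y) * wdelta w d x y)"
    and eq: "(LINT y:{x-d..x+d}|lborel. (U x - U y) * wdelta w d x y) = F"
  shows "\<bar>U x\<bar> \<le> (\<bar>F\<bar> + w 0 / d^3 * (LINT y:{0<..<1}|lborel. \<bar>U y\<bar>)) / (w (1/2) / d^2)"
proof -
  define J where "J = {x-d..x+d}"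
  define W where "W y = wdelta w d x y" for y
  define I where "I = {0<..<1::real}"
  have wh: "w (1/2) > 0" using A1_facts(4)[OF hw] .
  have si': "set_integrable lborel J (\<lambda>y. (U x - U y) * W y)" using si unfolding J_def W_def .
  have si0: "set_integrable lborel J (\<lambda>y. W y)"
    using W_si_cont[OF hw dp, of "\<lambda>y. 1" x] unfolding J_def W_def by simp
  have six: "set_integrable lborel J (\<lambda>y. U x * W y)" using si0 by simp
  have siy: "set_integrable lborel J (\<lambda>y. U y * W y)"
  proof -
    have "set_integrable lborel J (\<lambda>y. U x * W y - (U x - U y) * W y)"
      using set_integral_diff(1)[OF six si'] .
    then show ?thesis by (simp add: algebra_simps)
  qed
  have Wn: "0 \<le> W y" for y using W_basic(1)[OF hw dp] unfolding W_def by auto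
  have WB: "W y \<le> w 0 / d^3" for y using W_basic(2)[OF hw dp] unfolding W_def by auto
  define c where "c = (LINT y:J|lborel. W y)"
  have c1: "w (1/2) / d^2 \<le> c" using W_moment0(1)[OF hw dp, of x] unfolding c_def J_def W_def .
  have cp: "c > 0" using c1 wh dp by (smt (verit) divide_pos_pos zero_less_power)
  have eqF: "F = U x * c - (LINT y:J|lborel. U y * W y)"
  proof -
    have "F = (LINT y:J|lborel. U x * W y - U y * W y)"
      using eq unfolding J_def W_def by (simp add: algebra_simps)
    also have "\<dots> = (LINT y:J|lborel. U x * W y) - (LINT y:J|lborel. U y * W y)"
      using set_integral_diff(2)[OF six siy] .
    finally show ?thesis unfolding c_def by simp
  qed
  have siay: "set_integrable lborel J (\<lambda>y. \<bar>U y\<bar> * W y)"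
    using set_integrable_abs[OF siy] Wn by (simp add: abs_mult)
  have a1: "\<bar>LINT y:J|lborel. U y * W y\<bar> \<le> (LINT y:J|lborel. \<bar>U y\<bar> * W y)"
  proof -
    have "(LINT y:J|lborel. U y * W y) \<le> (LINT y:J|lborel. \<bar>U y\<bar> * W y)"
      by (rule set_integral_mono[OF siy siay]) (use Wn in \<open>simp add: mult_right_mono\<close>)
    moreover have "(LINT y:J|lborel. - (\<bar>U y\<bar> * W y)) \<le> (LINT y:J|lborel. U y * W y)"
    proof (rule set_integral_mono[OF _ siy])
      show "set_integrable lborel J (\<lambda>y. - (\<bar>U y\<bar> * W y))" using siay unfolding set_integrable_def by simp
      fix y
      have "(- \<bar>U y\<bar>) * W y \<le> U y * W y" using Wn[of y] by (intro mult_right_mono) auto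
      then show "- (\<bar>U y\<bar> * W y) \<le> U y * W y" by simp
    qed
    ultimately show ?thesis using set_integral_uminus[OF siay] by (simp add: abs_le_iff)
  qed
  have iI: "integrable lborel (\<lambda>y. indicator I y * \<bar>U y\<bar>)" using L1 unfolding set_integrable_def I_def by simp
  have a2: "(LINT y:J|lborel. \<bar>U y\<bar> * W y) \<le> (LINT y:J|lborel. w 0 / d^3 * (indicator I y * \<bar>U y\<bar>))"
  proof (rule set_integral_mono[OF siay])
    show "set_integrable lborel J (\<lambda>y. w 0 / d^3 * (indicator I y * \<bar>U y\<bar>))"
      unfolding set_integrable_def using iI
      by (intro integrable_mult_indicator integrable_mult_right) (auto simp: J_def)
    fix y assume y: "y \<in> J"
    show "\<bar>U y\<bar> * W y \<le> w 0 / d^3 * (indicator I y * \<bar>U y\<bar>)"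
    proof (cases "y \<in> I")
      case True
      have "\<bar>U y\<bar> * W y \<le> \<bar>U y\<bar> * (w 0 / d^3)" using WB[of y] by (intro mult_left_mono) auto
      then show ?thesis using True by (simp add: mult.commute)
    next
      case False
      then have "y \<in> {-d<..0} \<or> y \<in> {1..<1+d}" using y x unfolding J_def I_def by auto
      then show ?thesis using collar False by auto
    qed
  qed
  have a3: "(LINT y:J|lborel. w 0 / d^3 * (indicator I y * \<bar>U y\<bar>)) \<le> w 0 / d^3 * (LINT y:I|lborel. \<bar>U y\<bar>)"
  proof -
    have "(LINT y:J|lborel. (indicator I y * \<bar>U y\<bar>)) \<le> (LINT y:I|lborel. \<bar>U y\<bar>)"
      unfolding set_lebesgue_integral_def
    proof (rule integral_mono)
      show "integrable lborel (\<lambda>y. indicator J y *\<^sub>R (indicator I y * \<bar>U y\<bar>))"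
        using iI by (intro integrable_mult_indicator) (auto simp: J_def)
      show "integrable lborel (\<lambda>y. indicator I y *\<^sub>R \<bar>U y\<bar>)" using iI by simp
      fix y show "indicator J y *\<^sub>R (indicator I y * \<bar>U y\<bar>) \<le> indicator I y *\<^sub>R \<bar>U y\<bar>"
        by (auto simp: indicator_def)
    qed
    moreover have "w 0 / d^3 \<ge> 0" using A1_facts(1)[OF hw, of 0] dp by simp
    ultimately have "w 0 / d^3 * (LINT y:J|lborel. (indicator I y * \<bar>U y\<bar>)) \<le> w 0 / d^3 * (LINT y:I|lborel. \<bar>U y\<bar>)"
      by (rule mult_left_mono)
    then show ?thesis by (simp only: set_integral_mult_right)
  qed
  have "\<bar>U x\<bar> * c \<le> \<bar>F\<bar> + w 0 / d^3 * (LINT y:I|lborel. \<bar>U y\<bar>)"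
  proof -
    have "\<bar>U x\<bar> * c = \<bar>U x * c\<bar>" using cp by (simp add: abs_mult)
    also have "U x * c = F + (LINT y:J|lborel. U y * W y)" using eqF by simp
    finally show ?thesis using a1 a2 a3 by linarith
  qed
  then have "\<bar>U x\<bar> \<le> (\<bar>F\<bar> + w 0 / d^3 * (LINT y:I|lborel. \<bar>U y\<bar>)) / c"
    using cp by (simp add: pos_le_divide_eq)
  also have "\<dots> \<le> (\<bar>F\<bar> + w 0 / d^3 * (LINT y:I|lborel. \<bar>U y\<bar>)) / (w (1/2) / d^2)"
  proof (rule divide_left_mono[OF c1])
    have "0 \<le> (LINT y:I|lborel. \<bar>U y\<bar>)" unfolding set_lebesgue_integral_def by (rule Bochner_Integration.integral_nonneg) (auto simp: indicator_def)
    moreover have "w 0 / d^3 \<ge> 0" using A1_facts(1)[OF hw, of 0] dp by simp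
    ultimately have "0 \<le> w 0 / d^3 * (LINT y:I|lborel. \<bar>U y\<bar>)" by (rule mult_nonneg_nonneg[rotated])
    then show "0 \<le> \<bar>F\<bar> + w 0 / d^3 * (LINT y:I|lborel. \<bar>U y\<bar>)" by (simp only: add_nonneg_nonneg abs_ge_zero)
    show "0 < c * (w (1/2) / d^2)" using cp wh dp by simp
  qed
  finally show ?thesis unfolding I_def .
qed

lemma step_lemma:
  fixes D :: "nat \<Rightarrow> real \<Rightarrow> real" and U :: "real \<Rightarrow> real"
  assumes hw: "A1 w" and d: "0 < d" "d < 1/2"
    and der: "\<forall>i<4. \<forall>x\<in>{0..1}. (D i has_real_derivative D (Suc i) x) (at x within {0..1})"
    and cont: "\<forall>i\<le>4. continuous_on {0..1} (D i)"
    and M0: "\<forall>t\<in>{0..1}. \<bar>D 0 t\<bar> \<le> M0"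
    and M1: "\<forall>t\<in>{0..1}. \<bar>D 1 t\<bar> \<le> M1"
    and M2: "\<forall>t\<in>{0..1}. \<bar>D 2 t\<bar> \<le> M2"
    and M3: "\<forall>t\<in>{0..1}. \<bar>D 3 t\<bar> \<le> M3"
    and bc: "D 0 0 = 0" "D 0 1 = 0"
    and x: "x \<in> {0<..<1}"
    and fx: "fx = - D 2 x"
    and ut: "ut = (\<lambda>y. indicator {0..1} y * D 0 y)"
    and Phi: "Phi = (\<lambda>y. (M3 * w 0 / 6 + 1) * d * ((y + d) * (1 + d - y)) + (M1 + M2) * (d - (max 0 (-y) + max 0 (y - 1))))"
    and s: "\<bar>s\<bar> = 1"
    and si: "set_integrable lborel {x-d..x+d} (\<lambda>y. (U x - U y) * wdelta w d x y)"
    and eq: "(LINT y:{x-d..x+d}|lborel. (U x - U y) * wdelta w d x y) = fx"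
  shows "set_integrable lborel {x-d..x+d} (\<lambda>y. ((s * (U x - ut x) - Phi x) - (s * (U y - ut y) - Phi y)) * wdelta w d x y) \<and>
     (LINT y:{x-d..x+d}|lborel. ((s * (U x - ut x) - Phi x) - (s * (U y - ut y) - Phi y)) * wdelta w d x y) \<le> - d"
proof -
  define J where "J = {x-d..x+d}"
  define W where "W y = wdelta w d x y" for y
  have dp: "d > 0" using d by simp
  have bar: "\<bar>fx - (LINT y:J|lborel. (ut x - ut y) * W y)\<bar> + d \<le> (LINT y:J|lborel. (Phi x - Phi y) * W y)"
    using barrier[OF hw d der cont M0 M1 M2 M3 bc x fx ut Phi] unfolding J_def W_def .
  have M0p: "M0 \<ge> 0" using M0 by (metis abs_ge_zero atLeastAtMost_iff order_trans zero_le_one order_refl)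
  have utm: "ut \<in> borel_measurable borel"
    unfolding ut using borel_measurable_continuous_on_indicator[of "{0..1}" "D 0"] cont by simp
  have utb: "\<bar>ut y\<bar> \<le> M0" for y using M0 M0p unfolding ut by (auto simp: indicator_def)
  have i1: "set_integrable lborel J (\<lambda>y. s * ((U x - U y) * W y))"
    using si unfolding J_def W_def by simp
  have i2: "set_integrable lborel J (\<lambda>y. s * ((ut x - ut y) * W y))"
  proof -
    have "set_integrable lborel J (\<lambda>y. (ut x - ut y) * W y)"
      unfolding J_def W_def
      by (rule W_si[OF hw dp, where B="2 * M0"]) (use utm utb in \<open>auto simp: abs_le_iff, (smt (verit) utb)+\<close>)
    then show ?thesis by simp
  qed
  have i3: "set_integrable lborel J (\<lambda>y. (Phi x - Phi y) * W y)"
    unfolding J_def W_def Phi by (rule W_si_cont[OF hw dp]) (intro continuous_intros)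
  have e: "((s * (U x - ut x) - Phi x) - (s * (U y - ut y) - Phi y)) * W y
      = s * ((U x - U y) * W y) - s * ((ut x - ut y) * W y) - (Phi x - Phi y) * W y" for y
    by (simp add: algebra_simps)
  have si2: "set_integrable lborel J (\<lambda>y. s * ((U x - U y) * W y) - s * ((ut x - ut y) * W y) - (Phi x - Phi y) * W y)"
    using set_integral_diff(1)[OF set_integral_diff(1)[OF i1 i2] i3] .
  have L: "(LINT y:J|lborel. s * ((U x - U y) * W y) - s * ((ut x - ut y) * W y) - (Phi x - Phi y) * W y)
      = s * fx - s * (LINT y:J|lborel. (ut x - ut y) * W y) - (LINT y:J|lborel. (Phi x - Phi y) * W y)"
    apply (subst set_integral_diff(2)[OF set_integral_diff(1)[OF i1 i2] i3])
    apply (subst set_integral_diff(2)[OF i1 i2])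
    using eq unfolding J_def W_def by simp
  have "s * fx - s * (LINT y:J|lborel. (ut x - ut y) * W y) \<le> \<bar>fx - (LINT y:J|lborel. (ut x - ut y) * W y)\<bar>"
  proof -
    have "s * fx - s * (LINT y:J|lborel. (ut x - ut y) * W y) = s * (fx - (LINT y:J|lborel. (ut x - ut y) * W y))"
      by (simp add: algebra_simps)
    also have "\<dots> \<le> \<bar>s * (fx - (LINT y:J|lborel. (ut x - ut y) * W y))\<bar>" by simp
    also have "\<dots> = \<bar>fx - (LINT y:J|lborel. (ut x - ut y) * W y)\<bar>" using s by (simp add: abs_mult)
    finally show ?thesis .
  qed
  then have "(LINT y:J|lborel. s * ((U x - U y) * W y) - s * ((ut x - ut y) * W y) - (Phi x - Phi y) * W y) \<le> - d"
    using L bar by linarith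
  moreover have ef: "(\<lambda>y. ((s * (U x - ut x) - Phi x) - (s * (U y - ut y) - Phi y)) * W y)
      = (\<lambda>y. s * ((U x - U y) * W y) - s * ((ut x - ut y) * W y) - (Phi x - Phi y) * W y)"
    by (intro ext) (rule e)
  ultimately show ?thesis using si2 unfolding W_def[symmetric] J_def[symmetric] ef by simp
qed



lemma cont_bdd:
  fixes g :: "real \<Rightarrow> real"
  assumes "continuous_on {0..1} g"
  shows "\<exists>M\<ge>0. \<forall>t\<in>{0..1}. \<bar>g t\<bar> \<le> M"
proof -
  have "compact (g ` {0..1})" using assms by (intro compact_continuous_image) auto
  then obtain B where B: "\<forall>z\<in>g ` {0..1}. norm z \<le> B" using compact_imp_bounded bounded_iff by metis
  then have "\<forall>t\<in>{0..1}. \<bar>g t\<bar> \<le> B" by auto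
  moreover have "B \<ge> 0" using B by (metis abs_ge_zero atLeastAtMost_iff image_eqI order_trans real_norm_def zero_le_one order_refl)
  ultimately show ?thesis by blast
qed

theorem mainTheorem11:
  fixes w f u :: "real \<Rightarrow> real" and ud :: "real \<Rightarrow> real \<Rightarrow> real"
  assumes hw: "A1 w"
    and hf: "Ck_on 2 {0..1} f"
    and hu: "Ck_on 4 {0..1} u"
    and hpde: "\<forall>x\<in>{0<..<1}. - deriv (deriv u) x = f x"
    and hbc: "u 0 = 0" "u 1 = 0"
    and hud_meas: "\<forall>\<delta>\<in>{0<..<1/2}. ud \<delta> \<in> borel_measurable lborel"
    and hud_L2: "\<forall>\<delta>\<in>{0<..<1/2}. set_integrable lborel {0<..<1} (\<lambda>x. (ud \<delta> x)\<^sup>2)"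
    and hud_ext: "\<forall>\<delta>\<in>{0<..<1/2}. \<forall>y. (y \<in> {-\<delta><..0} \<or> y \<in> {1..<1+\<delta>}) \<longrightarrow> ud \<delta> y = 0"
    and hud_eq: "\<forall>\<delta>\<in>{0<..<1/2}. AE x in lborel. x \<in> {0<..<1} \<longrightarrow>
         set_integrable lborel {x-\<delta>..x+\<delta>} (\<lambda>y. (ud \<delta> x - ud \<delta> y) * wdelta w \<delta> x y) \<and>
         (LINT y:{x-\<delta>..x+\<delta>}|lborel. (ud \<delta> x - ud \<delta> y) * wdelta w \<delta> x y) = f x"
  shows "\<exists>\<delta>0>0. \<exists>C>0. \<forall>\<delta>\<in>{0<..<\<delta>0}.
           AE x in lborel. x \<in> {0<..<1} \<longrightarrow> \<bar>ud \<delta> x - u x\<bar> \<le> C * \<delta>"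
proof -
  obtain D where D0: "D 0 = u"
    and der: "\<forall>i<4. \<forall>x\<in>{0..1}. (D i has_real_derivative D (Suc i) x) (at x within {0..1})"
    and cont: "\<forall>i\<le>4. continuous_on {0..1} (D i)"
    using hu unfolding Ck_on_def by blast
  obtain M0 where M0p: "M0 \<ge> 0" and M0: "\<forall>t\<in>{0..1}. \<bar>D 0 t\<bar> \<le> M0" using cont_bdd[of "D 0"] cont by auto
  obtain M1 where M1p: "M1 \<ge> 0" and M1: "\<forall>t\<in>{0..1}. \<bar>D 1 t\<bar> \<le> M1" using cont_bdd[of "D 1"] cont by auto
  obtain M2 where M2p: "M2 \<ge> 0" and M2: "\<forall>t\<in>{0..1}. \<bar>D 2 t\<bar> \<le> M2" using cont_bdd[of "D 2"] cont by auto
  obtain M3 where M3p: "M3 \<ge> 0" and M3: "\<forall>t\<in>{0..1}. \<bar>D 3 t\<bar> \<le> M3" using cont_bdd[of "D 3"] cont by auto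
  have bc: "D 0 0 = 0" "D 0 1 = 0" using hbc D0 by auto
  have w0p: "w 0 \<ge> 0" using A1_facts(1)[OF hw, of 0] by simp
  have dat: "(D i has_real_derivative D (Suc i) s) (at s)" if "i < 4" "0 < s" "s < 1" for i s
  proof -
    have "(D i has_real_derivative D (Suc i) s) (at s within {0..1})" using der that by auto
    moreover have "at s within {0..1} = at s" using that by (intro at_within_Icc_at) auto
    ultimately show ?thesis by simp
  qed
  have fD: "f x = - D 2 x" if x: "x \<in> {0<..<1}" for x
  proof -
    have du: "deriv u t = D 1 t" if t: "t \<in> {0<..<1}" for t
    proof -
      have "(D 0 has_real_derivative D 1 t) (at t)" using dat[of 0 t] t by simp
      then have "(u has_real_derivative D 1 t) (at t)" using D0 by simp
      then show ?thesis by (rule DERIV_imp_deriv)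
    qed
    have d1: "(D 1 has_real_derivative D 2 x) (at x)" using dat[of 1 x] x by (simp add: numeral_eq_Suc)
    have "(deriv u has_real_derivative D 2 x) (at x)"
    proof (rule has_field_derivative_transform_within_open[OF d1])
      show "open {0<..<1::real}" by simp
      show "x \<in> {0<..<1}" using x .
      fix t :: real assume "t \<in> {0<..<1}"
      then show "D 1 t = deriv u t" using du by simp
    qed
    then have "deriv (deriv u) x = D 2 x" by (rule DERIV_imp_deriv)
    moreover have "- deriv (deriv u) x = f x" using hpde x by blast
    ultimately show ?thesis by simp
  qed
  define a where "a = M3 * w 0 / 6 + 1"
  define K where "K = M1 + M2"
  have ap: "a \<ge> 1" unfolding a_def using M3p w0p by simp
  have Kp: "K \<ge> 0" unfolding K_def using M1p M2p by simp
  have main: "\<forall>d\<in>{0<..<1/2::real}. AE x in lborel. x \<in> {0<..<1} \<longrightarrow> \<bar>ud d x - u x\<bar> \<le> (a + K + 1) * d"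
  proof
    fix d assume dd: "d \<in> {0<..<1/2::real}"
    have d: "0 < d" "d < 1/2" using dd by auto
    define U where "U = ud d"
    define ut where "ut = (\<lambda>y. indicator {0..1} y * D 0 y)"
    define Phi where "Phi = (\<lambda>y. (M3 * w 0 / 6 + 1) * d * ((y + d) * (1 + d - y)) + (M1 + M2) * (d - (max 0 (-y) + max 0 (y - 1))))"
    have Um: "U \<in> borel_measurable borel" using hud_meas dd unfolding U_def by simp
    have UL1: "set_integrable lborel {0<..<1} (\<lambda>x. \<bar>U x\<bar>)"
      using L1_of_L2[OF Um] hud_L2 dd unfolding U_def by simp
    have Ucol: "\<And>y. (y \<in> {-d<..0} \<or> y \<in> {1..<1+d}) \<Longrightarrow> U y = 0" using hud_ext dd unfolding U_def by blast
    have Ueq: "AE x in lborel. x \<in> {0<..<1} \<longrightarrow>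
         set_integrable lborel {x-d..x+d} (\<lambda>y. (U x - U y) * wdelta w d x y) \<and>
         (LINT y:{x-d..x+d}|lborel. (U x - U y) * wdelta w d x y) = f x"
      using hud_eq dd unfolding U_def by blast
    have utm: "ut \<in> borel_measurable borel"
      unfolding ut_def using borel_measurable_continuous_on_indicator[of "{0..1}" "D 0"] cont by simp
    have Phim: "Phi \<in> borel_measurable borel"
      unfolding Phi_def by (intro borel_measurable_continuous_onI) (intro continuous_intros)
    have Phi_nn: "Phi y \<ge> 0" if "y \<in> {-d..1+d}" for y
    proof -
      have p1: "(y + d) * (1 + d - y) \<ge> 0" using that by auto
      have p2: "d - (max 0 (-y) + max 0 (y - 1)) \<ge> 0" using that d by auto
      have "a * d * ((y + d) * (1 + d - y)) \<ge> 0" using ap d p1 by simp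
      moreover have "K * (d - (max 0 (-y) + max 0 (y - 1))) \<ge> 0" using Kp p2 by simp
      ultimately show ?thesis unfolding Phi_def a_def[symmetric] K_def[symmetric] by linarith
    qed
    have Phi_le: "Phi y \<le> (a + K) * d" if "y \<in> {0..1}" for y
    proof -
      have e: "(y + d) * (1 + d - y) = ((1 + 2*d)/2)^2 - (y - 1/2)^2" by (simp add: power2_eq_square field_simps)
      have "((1 + 2*d)/2)^2 \<le> 1^2" using d by (intro power_mono) auto
      then have p: "(y + d) * (1 + d - y) \<le> 1" unfolding e by (smt (verit) zero_le_power2 one_power2)
      have g0: "max 0 (-y) + max 0 (y - 1) = 0" using that by auto
      have "Phi y = a * d * ((y + d) * (1 + d - y)) + K * d" unfolding Phi_def a_def K_def g0 by simp
      also have "\<dots> \<le> a * d * 1 + K * d" using p ap d Kp by (intro add_mono mult_left_mono) auto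
      finally show ?thesis by (simp add: algebra_simps)
    qed
    have ut_eq: "ut x = u x" if "x \<in> {0..1}" for x using that D0 unfolding ut_def by simp
    have ut_col: "ut y = 0" if "y \<in> {-d<..0} \<or> y \<in> {1..<1+d}" for y
      using that bc unfolding ut_def by (auto simp: indicator_def)
    have utb: "\<bar>ut y\<bar> \<le> M0" for y using M0 M0p unfolding ut_def by (auto simp: indicator_def)
    define Bd where "Bd = (M2 + w 0 / d^3 * (LINT y:{0<..<1}|lborel. \<bar>U y\<bar>)) / (w (1/2) / d^2)"
    have Ubd: "AE x in lborel. x \<in> {0<..<1} \<longrightarrow> \<bar>U x\<bar> \<le> Bd"
      using Ueq
    proof eventually_elim
      case (elim x)
      show ?case
      proof
        assume x: "x \<in> {0<..<1}"
        have "\<bar>U x\<bar> \<le> (\<bar>f x\<bar> + w 0 / d^3 * (LINT y:{0<..<1}|lborel. \<bar>U y\<bar>)) / (w (1/2) / d^2)"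
          using ud_bound[OF hw d(1) Um UL1 Ucol x] elim x by blast
        also have "\<dots> \<le> Bd" unfolding Bd_def
        proof (intro divide_right_mono add_right_mono)
          show "\<bar>f x\<bar> \<le> M2" using fD[OF x] M2 x by auto
          show "0 \<le> w (1/2) / d^2" using A1_facts(4)[OF hw] by simp
        qed
        finally show "\<bar>U x\<bar> \<le> Bd" .
      qed
    qed
    have AEs: "AE x in lborel. x \<in> {0<..<1} \<longrightarrow> (s * (U x - ut x) - Phi x) \<le> 0" if s: "\<bar>s\<bar> = 1" for s
    proof (rule maxp[OF hw d(1)])
      show "(\<lambda>y. s * (U y - ut y) - Phi y) \<in> borel_measurable borel" using Um utm Phim by measurable
      fix y assume y: "y \<in> {-d<..0} \<or> y \<in> {1..<1+d}"
      have "Phi y \<ge> 0" using Phi_nn y by auto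
      then show "s * (U y - ut y) - Phi y \<le> 0" using Ucol[OF y] ut_col[OF y] by simp
    next
      show "AE x in lborel. x \<in> {0<..<1} \<longrightarrow>
        set_integrable lborel {x-d..x+d} (\<lambda>y. ((s * (U x - ut x) - Phi x) - (s * (U y - ut y) - Phi y)) * wdelta w d x y) \<and>
        (LINT y:{x-d..x+d}|lborel. ((s * (U x - ut x) - Phi x) - (s * (U y - ut y) - Phi y)) * wdelta w d x y) \<le> - d"
        using Ueq
      proof eventually_elim
        case (elim x)
        show ?case
        proof
          assume x: "x \<in> {0<..<1}"
          show "set_integrable lborel {x-d..x+d} (\<lambda>y. ((s * (U x - ut x) - Phi x) - (s * (U y - ut y) - Phi y)) * wdelta w d x y) \<and>
            (LINT y:{x-d..x+d}|lborel. ((s * (U x - ut x) - Phi x) - (s * (U y - ut y) - Phi y)) * wdelta w d x y) \<le> - d"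
            using step_lemma[OF hw d der cont M0 M1 M2 M3 bc x fD[OF x] ut_def Phi_def s] elim x by blast
        qed
      qed
    next
      show "AE x in lborel. x \<in> {0<..<1} \<longrightarrow> s * (U x - ut x) - Phi x \<le> Bd + M0"
        using Ubd
      proof eventually_elim
        case (elim x)
        show ?case
        proof
          assume x: "x \<in> {0<..<1}"
          have "s * (U x - ut x) \<le> \<bar>s * (U x - ut x)\<bar>" by simp
          also have "\<dots> = \<bar>U x - ut x\<bar>" using s by (simp add: abs_mult)
          also have "\<dots> \<le> Bd + M0" using elim x utb[of x] by linarith
          moreover have "Phi x \<ge> 0" using Phi_nn[of x] x d by auto
          ultimately show "s * (U x - ut x) - Phi x \<le> Bd + M0" by linarith
        qed
      qed
    qed
    show "AE x in lborel. x \<in> {0<..<1} \<longrightarrow> \<bar>ud d x - u x\<bar> \<le> (a + K + 1) * d"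
    proof -
      have p: "AE x in lborel. x \<in> {0<..<1} \<longrightarrow> 1 * (U x - ut x) - Phi x \<le> 0" by (rule AEs) simp
      have n: "AE x in lborel. x \<in> {0<..<1} \<longrightarrow> (-1) * (U x - ut x) - Phi x \<le> 0" by (rule AEs) simp
      show ?thesis using p n
    proof eventually_elim
      case (elim x)
      show ?case
      proof
        assume x: "x \<in> {0<..<1}"
        have "\<bar>U x - u x\<bar> \<le> Phi x" using elim x ut_eq[of x] by auto
        also have "\<dots> \<le> (a + K) * d" using Phi_le[of x] x by auto
        also have "\<dots> \<le> (a + K + 1) * d" using d by simp
        finally show "\<bar>ud d x - u x\<bar> \<le> (a + K + 1) * d" unfolding U_def .
      qed
    qed
    qed
  qed
  have C: "0 < a + K + 1" using ap Kp by simp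
  show ?thesis
    apply (rule exI[where x="1/2::real"])
    apply (rule conjI)
     apply simp
    apply (rule exI[where x="a + K + 1"])
    using C main by blast
qed

end
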